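(* Let $G$ be a finite group acting on a finite set $\mathsf X$, and let $L:G\times G\times\mathsf X\to\mathbb{C}^\times$, $(g,h,x)\mapsto L^x_{g,h}$, and $\omega:G^3\to\mathbb{C}^\times$ satisfy $$L^x_{g,hk}\,L^x_{h,k}=\omega(g,h,k)\,L^{kx}_{g,h}\,L^x_{gh,k}\qquad\text{for all }g,h,k\in G,\ x\in\mathsf X.$$ Then the following are equivalent: (1) there is a gauge transformation $(\beta,\gamma)$ such that the transformed symbols satisfy $L'^x_{g,h}=1$ for all $g,h,x$; (2) there is a gauge transformation such that $L'^x_{a,b}=L'^y_{a,b}$ for all $a,b\in G$, $x,y\in\mathsf X$; (3) there is a gauge transformation such that $\ell'^x_{a,b;g}=1$ for all $a,b,g\in G$, $x\in\mathsf X$; (4) $L$ is block independent, i.e. there is a gauge transformation such that $\ell'^x_{a,b;g}=\ell'^y_{a,b;g}$ for all $a,b,g\in G$, $x,y\in\mathsf X$.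
   Context: A gauge transformation is a pair of functions $\beta:G\times G\to\mathbb{C}^\times$, $\gamma:G\times\mathsf X\to\mathbb{C}^\times$ ($(g,x)\mapsto\gamma^x_g$); it maps $L$ to $L'^x_{g,h}=\dfrac{\beta_{g,h}\,\gamma^x_{gh}}{\gamma^{hx}_{g}\,\gamma^x_h}L^x_{g,h}$. For any such family $L$ define $\ell^x_{a,b;g}=\dfrac{L^x_{ag,\,g^{-1}b}}{L^x_{a,b}}$, and $\ell'$ the same expression built from $L'$. Here $gx$ denotes the action of $g\in G$ on $x\in\mathsf X$. *)

theory Defs
  imports Complex_Main "HOL-Algebra.Group_Action"
begin

definition is_gauge :: "('g, 'b) monoid_scheme \<Rightarrow> 'x set \<Rightarrow> ('g \<Rightarrow> 'g \<Rightarrow> complex)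
    \<Rightarrow> ('g \<Rightarrow> 'x \<Rightarrow> complex) \<Rightarrow> bool" where
  "is_gauge G X \<beta> \<gamma> \<longleftrightarrow>
     (\<forall>g\<in>carrier G. \<forall>h\<in>carrier G. \<beta> g h \<noteq> 0) \<and>
     (\<forall>g\<in>carrier G. \<forall>x\<in>X. \<gamma> g x \<noteq> 0)"

definition gauge_transform :: "('g, 'b) monoid_scheme \<Rightarrow> ('g \<Rightarrow> 'x \<Rightarrow> 'x)
    \<Rightarrow> ('g \<Rightarrow> 'g \<Rightarrow> complex) \<Rightarrow> ('g \<Rightarrow> 'x \<Rightarrow> complex)
    \<Rightarrow> ('g \<Rightarrow> 'g \<Rightarrow> 'x \<Rightarrow> complex) \<Rightarrow> ('g \<Rightarrow> 'g \<Rightarrow> 'x \<Rightarrow> complex)" where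
  "gauge_transform G act \<beta> \<gamma> L =
     (\<lambda>g h x. \<beta> g h * \<gamma> (g \<otimes>\<^bsub>G\<^esub> h) x / (\<gamma> g (act h x) * \<gamma> h x) * L g h x)"

definition ell :: "('g, 'b) monoid_scheme \<Rightarrow> ('g \<Rightarrow> 'g \<Rightarrow> 'x \<Rightarrow> complex)
    \<Rightarrow> 'g \<Rightarrow> 'g \<Rightarrow> 'g \<Rightarrow> 'x \<Rightarrow> complex" where
  "ell G L a b g x = L (a \<otimes>\<^bsub>G\<^esub> g) (inv\<^bsub>G\<^esub> g \<otimes>\<^bsub>G\<^esub> b) x / L a b x"

end

theory Submission
  imports Defs
begin

lemma act_one:
  assumes "group_action G X act" "x \<in> X"
  shows "act \<one>\<^bsub>G\<^esub> x = x"
  using fun_cong[OF group_action.id_eq_one[OF assms(1)], of x] assms(2) by simp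

lemma act_in:
  assumes "group_action G X act" "x \<in> X" "g \<in> carrier G"
  shows "act g x \<in> X"
  by (rule group_action.element_image[OF assms(1) assms(3) assms(2) refl])

lemma act_comp:
  assumes "group_action G X act" "x \<in> X" "g \<in> carrier G" "h \<in> carrier G"
  shows "act (g \<otimes>\<^bsub>G\<^esub> h) x = act g (act h x)"
  by (rule group_action.composition_rule[OF assms])

lemma alg:
  fixes b1 b2 b3 b4 A B C D E F l1 l2 l3 l4 w :: complex
  assumes "l1 * l2 = w * l3 * l4" "b3 \<noteq> 0" "b4 \<noteq> 0" "B \<noteq> 0" "C \<noteq> 0" "D \<noteq> 0" "E \<noteq> 0" "F \<noteq> 0"
  shows "b1 * A / (B * C) * l1 * (b2 * C / (D * E) * l2) = (w * b1 * b2 / (b3 * b4)) * (b3 * F / (B * D) * l3) * (b4 * A / (F * E) * l4)"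
proof -
  have "b1 * A / (B * C) * l1 * (b2 * C / (D * E) * l2) = b1 * b2 * A * (l1 * l2) / (B * D * E)"
    using assms by (simp add: field_simps)
  also have "\<dots> = b1 * b2 * A * (w * l3 * l4) / (B * D * E)" using assms(1) by simp
  also have "\<dots> = (w * b1 * b2 / (b3 * b4)) * (b3 * F / (B * D) * l3) * (b4 * A / (F * E) * l4)"
    using assms by (simp add: field_simps)
  finally show ?thesis .
qed

lemma gen2:
  fixes b A B C P Q l :: complex
  assumes "P \<noteq> 0" "Q \<noteq> 0"
  shows "b * (A * P) / ((B * Q) * (C * P)) * l = (b * A / (B * C) * l) / Q"
proof -
  have "b * (A * P) / ((B * Q) * (C * P)) = (b * A / (B * C)) * (P / P) / Q"
    by (simp add: divide_simps mult_ac)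
  then show ?thesis using assms by simp
qed

lemma transform_cocycle:
  fixes G :: "('g, 'b) monoid_scheme" (structure)
  assumes grp: "group G" and ga: "group_action G X act"
    and L_nz: "\<forall>g\<in>carrier G. \<forall>h\<in>carrier G. \<forall>x\<in>X. L g h x \<noteq> 0"
    and cocycle: "\<forall>g\<in>carrier G. \<forall>h\<in>carrier G. \<forall>k\<in>carrier G. \<forall>x\<in>X.
        L g (h \<otimes>\<^bsub>G\<^esub> k) x * L h k x = \<omega> g h k * L g h (act k x) * L (g \<otimes>\<^bsub>G\<^esub> h) k x"
    and gauge: "is_gauge G X \<beta> \<gamma>"
  shows "\<forall>g\<in>carrier G. \<forall>h\<in>carrier G. \<forall>k\<in>carrier G. \<forall>x\<in>X.
        gauge_transform G act \<beta> \<gamma> L g (h \<otimes>\<^bsub>G\<^esub> k) x * gauge_transform G act \<beta> \<gamma> L h k x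
        = (\<omega> g h k * \<beta> g (h \<otimes>\<^bsub>G\<^esub> k) * \<beta> h k / (\<beta> g h * \<beta> (g \<otimes>\<^bsub>G\<^esub> h) k))
          * gauge_transform G act \<beta> \<gamma> L g h (act k x) * gauge_transform G act \<beta> \<gamma> L (g \<otimes>\<^bsub>G\<^esub> h) k x"
proof (intro ballI)
  fix g h k x assume g: "g \<in> carrier G" and h: "h \<in> carrier G" and k: "k \<in> carrier G" and x: "x \<in> X"
  interpret group G by (rule grp)
  have hk: "h \<otimes> k \<in> carrier G" and gh: "g \<otimes> h \<in> carrier G" using g h k by auto
  have kx: "act k x \<in> X" using act_in[OF ga x k] .
  have hkx: "act h (act k x) = act (h \<otimes> k) x" using act_comp[OF ga x h k] by simp
  have ass: "g \<otimes> h \<otimes> k = g \<otimes> (h \<otimes> k)" using g h k m_assoc by blast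
  have hkxX: "act (h \<otimes> k) x \<in> X" using act_in[OF ga x hk] .
  have nz: "\<beta> g (h \<otimes> k) \<noteq> 0" "\<beta> h k \<noteq> 0" "\<beta> g h \<noteq> 0" "\<beta> (g \<otimes> h) k \<noteq> 0"
    "\<gamma> g (act (h \<otimes> k) x) \<noteq> 0" "\<gamma> (h \<otimes> k) x \<noteq> 0" "\<gamma> h (act k x) \<noteq> 0" "\<gamma> k x \<noteq> 0"
    "\<gamma> (g \<otimes> h) (act k x) \<noteq> 0" "\<gamma> (g \<otimes> (h \<otimes> k)) x \<noteq> 0"
    using gauge g h k hk gh x kx hkxX unfolding is_gauge_def by (auto simp: ass[symmetric])
  have c: "L g (h \<otimes> k) x * L h k x = \<omega> g h k * L g h (act k x) * L (g \<otimes> h) k x"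
    using cocycle g h k x by blast
  show "gauge_transform G act \<beta> \<gamma> L g (h \<otimes>\<^bsub>G\<^esub> k) x * gauge_transform G act \<beta> \<gamma> L h k x
        = (\<omega> g h k * \<beta> g (h \<otimes>\<^bsub>G\<^esub> k) * \<beta> h k / (\<beta> g h * \<beta> (g \<otimes>\<^bsub>G\<^esub> h) k))
          * gauge_transform G act \<beta> \<gamma> L g h (act k x) * gauge_transform G act \<beta> \<gamma> L (g \<otimes>\<^bsub>G\<^esub> h) k x"
    unfolding gauge_transform_def hkx ass
    by (rule alg[OF c]) (use nz in auto)
qed

lemma key:
  fixes G :: "('g, 'b) monoid_scheme" (structure)
  assumes grp: "group G" and ga: "group_action G X act"
    and M_nz: "\<forall>g\<in>carrier G. \<forall>h\<in>carrier G. \<forall>x\<in>X. M g h x \<noteq> 0"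
    and cocycle: "\<forall>g\<in>carrier G. \<forall>h\<in>carrier G. \<forall>k\<in>carrier G. \<forall>x\<in>X.
        M g (h \<otimes>\<^bsub>G\<^esub> k) x * M h k x = \<Omega> g h k * M g h (act k x) * M (g \<otimes>\<^bsub>G\<^esub> h) k x"
    and ellI: "\<forall>a\<in>carrier G. \<forall>b\<in>carrier G. \<forall>g\<in>carrier G. \<forall>x\<in>X. \<forall>y\<in>X.
           ell G M a b g x = ell G M a b g y"
    and a: "a \<in> carrier G" and b: "b \<in> carrier G" and x: "x \<in> X" and y: "y \<in> X"
  shows "M a b x / M \<one>\<^bsub>G\<^esub> \<one>\<^bsub>G\<^esub> (act b x) = M a b y / M \<one>\<^bsub>G\<^esub> \<one>\<^bsub>G\<^esub> (act b y)"
proof -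
  interpret group G by (rule grp)
  define \<psi> where "\<psi> z = M \<one> \<one> z" for z
  have psi_nz: "\<psi> z \<noteq> 0" if "z \<in> X" for z using M_nz that by (simp add: \<psi>_def)
  have ii: "M \<one> m z = \<Omega> \<one> \<one> m * \<psi> (act m z)" if "m \<in> carrier G" "z \<in> X" for m z
  proof -
    have e0: "M \<one> (\<one> \<otimes> m) z * M \<one> m z = \<Omega> \<one> \<one> m * M \<one> \<one> (act m z) * M (\<one> \<otimes> \<one>) m z"
      using cocycle that by blast
    have e: "M \<one> m z * M \<one> m z = (\<Omega> \<one> \<one> m * \<psi> (act m z)) * M \<one> m z"
      using e0 by (simp only: l_one[OF that(1)] l_one[OF one_closed] \<psi>_def)
    moreover have "M \<one> m z \<noteq> 0" using M_nz that by blast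
    ultimately show ?thesis using mult_right_cancel by blast
  qed
  have iii: "\<psi> z = \<Omega> g \<one> \<one> * M g \<one> z" if "g \<in> carrier G" "z \<in> X" for g z
  proof -
    have e0: "M g (\<one> \<otimes> \<one>) z * M \<one> \<one> z = \<Omega> g \<one> \<one> * M g \<one> (act \<one> z) * M (g \<otimes> \<one>) \<one> z"
      using cocycle that by blast
    have e: "\<psi> z * M g \<one> z = (\<Omega> g \<one> \<one> * M g \<one> z) * M g \<one> z"
      using e0 by (simp only: r_one[OF that(1)] l_one[OF one_closed] \<psi>_def act_one[OF ga that(2)] mult.commute)
    moreover have "M g \<one> z \<noteq> 0" using M_nz that by blast
    ultimately show ?thesis using mult_right_cancel by blast
  qed
  have rat: "M c d z / M \<one> (c \<otimes> d) z = M c d w / M \<one> (c \<otimes> d) w"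
    if "c \<in> carrier G" "d \<in> carrier G" "z \<in> X" "w \<in> X" for c d z w
  proof -
    have e: "ell G M \<one> (c \<otimes> d) c z = ell G M \<one> (c \<otimes> d) c w"
      using ellI that m_closed one_closed by blast
    have i: "inv c \<otimes> (c \<otimes> d) = d" using that by (simp add: m_assoc[symmetric])
    have "ell G M \<one> (c \<otimes> d) c u = M c d u / M \<one> (c \<otimes> d) u" for u
      unfolding ell_def by (simp only: i l_one[OF that(1)])
    then show ?thesis using e by simp
  qed
  define C where "C = \<Omega> a \<one> \<one> * \<Omega> \<one> \<one> a * (M a \<one> x / M \<one> a x)"
  have Cz: "\<psi> z = C * \<psi> (act a z)" if "z \<in> X" for z
  proof -
    have r: "M a \<one> x / M \<one> a x = M a \<one> z / M \<one> a z"
      using rat[OF a one_closed x that] by (simp only: r_one[OF a])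
    have nz: "M \<one> a z \<noteq> 0" using M_nz a that one_closed by blast
    have h1: "M a \<one> z = (M a \<one> x / M \<one> a x) * M \<one> a z" using r nz by simp
    have "\<psi> z = \<Omega> a \<one> \<one> * M a \<one> z" by (rule iii[OF a that])
    also have "\<dots> = \<Omega> a \<one> \<one> * ((M a \<one> x / M \<one> a x) * (\<Omega> \<one> \<one> a * \<psi> (act a z)))"
      by (simp only: h1 ii[OF a that])
    also have "\<dots> = C * \<psi> (act a z)" unfolding C_def by (simp only: mult_ac)
    finally show ?thesis .
  qed
  define s where "s = M a b x / M \<one> (a \<otimes> b) x"
  have ab: "a \<otimes> b \<in> carrier G" using a b by simp
  have Ms: "M a b z = (s * \<Omega> \<one> \<one> (a \<otimes> b)) * \<psi> (act a (act b z))" if "z \<in> X" for z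
  proof -
    have nz: "M \<one> (a \<otimes> b) z \<noteq> 0" using M_nz ab that one_closed by blast
    have h1: "M a b z = s * M \<one> (a \<otimes> b) z"
      using rat[OF a b x that] nz unfolding s_def by simp
    show ?thesis unfolding h1 ii[OF ab that] act_comp[OF ga that a b] by (simp only: mult_ac)
  qed
  have fin: "M a b z / \<psi> (act b z) = s * \<Omega> \<one> \<one> (a \<otimes> b) / C" if "z \<in> X" for z
  proof -
    have bz: "act b z \<in> X" using act_in[OF ga that b] .
    have az: "act a (act b z) \<in> X" using act_in[OF ga bz a] .
    have P: "\<psi> (act a (act b z)) \<noteq> 0" by (rule psi_nz[OF az])
    have CP: "C * \<psi> (act a (act b z)) \<noteq> 0" using psi_nz[OF bz] Cz[OF bz] by simp
    have gen: "\<And>k C P :: complex. P \<noteq> 0 \<Longrightarrow> C * P \<noteq> 0 \<Longrightarrow> (k * P) / (C * P) = k / C" by simp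
    show ?thesis unfolding Ms[OF that] Cz[OF bz] by (rule gen[OF P CP])
  qed
  show ?thesis using fin[OF x] fin[OF y] by (simp add: \<psi>_def)
qed

theorem mainTheorem7:
  fixes G :: "('g, 'b) monoid_scheme" and X :: "'x set" and act :: "'g \<Rightarrow> 'x \<Rightarrow> 'x"
    and L :: "'g \<Rightarrow> 'g \<Rightarrow> 'x \<Rightarrow> complex" and \<omega> :: "'g \<Rightarrow> 'g \<Rightarrow> 'g \<Rightarrow> complex"
  assumes "group G" and "finite (carrier G)" and "finite X"
    and "group_action G X act"
    and L_nz: "\<forall>g\<in>carrier G. \<forall>h\<in>carrier G. \<forall>x\<in>X. L g h x \<noteq> 0"
    and \<omega>_nz: "\<forall>g\<in>carrier G. \<forall>h\<in>carrier G. \<forall>k\<in>carrier G. \<omega> g h k \<noteq> 0"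
    and cocycle: "\<forall>g\<in>carrier G. \<forall>h\<in>carrier G. \<forall>k\<in>carrier G. \<forall>x\<in>X.
        L g (h \<otimes>\<^bsub>G\<^esub> k) x * L h k x = \<omega> g h k * L g h (act k x) * L (g \<otimes>\<^bsub>G\<^esub> h) k x"
  defines "P1 \<equiv> \<exists>\<beta> \<gamma>. is_gauge G X \<beta> \<gamma> \<and>
        (\<forall>g\<in>carrier G. \<forall>h\<in>carrier G. \<forall>x\<in>X. gauge_transform G act \<beta> \<gamma> L g h x = 1)"
    and "P2 \<equiv> \<exists>\<beta> \<gamma>. is_gauge G X \<beta> \<gamma> \<and>
        (\<forall>a\<in>carrier G. \<forall>b\<in>carrier G. \<forall>x\<in>X. \<forall>y\<in>X.
           gauge_transform G act \<beta> \<gamma> L a b x = gauge_transform G act \<beta> \<gamma> L a b y)"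
    and "P3 \<equiv> \<exists>\<beta> \<gamma>. is_gauge G X \<beta> \<gamma> \<and>
        (\<forall>a\<in>carrier G. \<forall>b\<in>carrier G. \<forall>g\<in>carrier G. \<forall>x\<in>X.
           ell G (gauge_transform G act \<beta> \<gamma> L) a b g x = 1)"
    and "P4 \<equiv> \<exists>\<beta> \<gamma>. is_gauge G X \<beta> \<gamma> \<and>
        (\<forall>a\<in>carrier G. \<forall>b\<in>carrier G. \<forall>g\<in>carrier G. \<forall>x\<in>X. \<forall>y\<in>X.
           ell G (gauge_transform G act \<beta> \<gamma> L) a b g x = ell G (gauge_transform G act \<beta> \<gamma> L) a b g y)"
  shows "(P1 \<longleftrightarrow> P2) \<and> (P2 \<longleftrightarrow> P3) \<and> (P3 \<longleftrightarrow> P4)"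
proof -
  interpret group G by (rule assms(1))
  have ga: "group_action G X act" by (rule assms(4))
  have Lp_nz: "gauge_transform G act \<beta> \<gamma> L g h x \<noteq> 0"
    if "is_gauge G X \<beta> \<gamma>" "g \<in> carrier G" "h \<in> carrier G" "x \<in> X" for \<beta> \<gamma> g h x
  proof -
    have "act h x \<in> X" using act_in[OF ga that(4,3)] .
    then show ?thesis using that L_nz unfolding is_gauge_def gauge_transform_def by auto
  qed
  have "P1 \<Longrightarrow> P3"
  proof -
    assume P1
    then obtain \<beta> \<gamma> where g: "is_gauge G X \<beta> \<gamma>" and one:
      "\<forall>g\<in>carrier G. \<forall>h\<in>carrier G. \<forall>x\<in>X. gauge_transform G act \<beta> \<gamma> L g h x = 1"
      unfolding P1_def by blast
    have "\<forall>a\<in>carrier G. \<forall>b\<in>carrier G. \<forall>g\<in>carrier G. \<forall>x\<in>X.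
           ell G (gauge_transform G act \<beta> \<gamma> L) a b g x = 1"
      using one by (simp add: ell_def)
    then show P3 unfolding P3_def using g by blast
  qed
  moreover have "P3 \<Longrightarrow> P4"
  proof -
    assume P3
    then obtain \<beta> \<gamma> where g: "is_gauge G X \<beta> \<gamma>" and one:
      "\<forall>a\<in>carrier G. \<forall>b\<in>carrier G. \<forall>g\<in>carrier G. \<forall>x\<in>X.
           ell G (gauge_transform G act \<beta> \<gamma> L) a b g x = 1"
      unfolding P3_def by blast
    have "\<forall>a\<in>carrier G. \<forall>b\<in>carrier G. \<forall>g\<in>carrier G. \<forall>x\<in>X. \<forall>y\<in>X.
           ell G (gauge_transform G act \<beta> \<gamma> L) a b g x = ell G (gauge_transform G act \<beta> \<gamma> L) a b g y"
      using one by simp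
    then show P4 unfolding P4_def using g by blast
  qed
  moreover have "P4 \<Longrightarrow> P2"
  proof -
    assume P4
    then obtain \<beta> \<gamma> where g: "is_gauge G X \<beta> \<gamma>" and el:
      "\<forall>a\<in>carrier G. \<forall>b\<in>carrier G. \<forall>g\<in>carrier G. \<forall>x\<in>X. \<forall>y\<in>X.
           ell G (gauge_transform G act \<beta> \<gamma> L) a b g x = ell G (gauge_transform G act \<beta> \<gamma> L) a b g y"
      unfolding P4_def by blast
    define M where "M = gauge_transform G act \<beta> \<gamma> L"
    have Mnz: "\<forall>g\<in>carrier G. \<forall>h\<in>carrier G. \<forall>x\<in>X. M g h x \<noteq> 0"
      using Lp_nz[OF g] by (simp add: M_def)
    have Mc: "\<forall>g\<in>carrier G. \<forall>h\<in>carrier G. \<forall>k\<in>carrier G. \<forall>x\<in>X.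
        M g (h \<otimes>\<^bsub>G\<^esub> k) x * M h k x = (\<lambda>g h k. \<omega> g h k * \<beta> g (h \<otimes>\<^bsub>G\<^esub> k) * \<beta> h k / (\<beta> g h * \<beta> (g \<otimes>\<^bsub>G\<^esub> h) k)) g h k * M g h (act k x) * M (g \<otimes>\<^bsub>G\<^esub> h) k x"
      using transform_cocycle[OF assms(1) ga L_nz cocycle g] by (simp add: M_def)
    note K = key[OF assms(1) ga Mnz Mc el[folded M_def]]
    define \<gamma>2 where "\<gamma>2 g x = \<gamma> g x * M \<one>\<^bsub>G\<^esub> \<one>\<^bsub>G\<^esub> x" for g x
    have g2: "is_gauge G X \<beta> \<gamma>2"
      using g Mnz unfolding is_gauge_def \<gamma>2_def by auto
    have eq: "gauge_transform G act \<beta> \<gamma>2 L a b x = M a b x / M \<one>\<^bsub>G\<^esub> \<one>\<^bsub>G\<^esub> (act b x)"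
      if "a \<in> carrier G" "b \<in> carrier G" "x \<in> X" for a b x
    proof -
      have bx: "act b x \<in> X" using act_in[OF ga that(3,2)] .
      have nz: "M \<one>\<^bsub>G\<^esub> \<one>\<^bsub>G\<^esub> x \<noteq> 0" "M \<one>\<^bsub>G\<^esub> \<one>\<^bsub>G\<^esub> (act b x) \<noteq> 0" "\<gamma> a (act b x) \<noteq> 0" "\<gamma> b x \<noteq> 0"
        using Mnz g that bx unfolding is_gauge_def by auto
      have "gauge_transform G act \<beta> \<gamma>2 L a b x = (\<beta> a b * \<gamma> (a \<otimes>\<^bsub>G\<^esub> b) x / (\<gamma> a (act b x) * \<gamma> b x) * L a b x) / M \<one>\<^bsub>G\<^esub> \<one>\<^bsub>G\<^esub> (act b x)"
        unfolding gauge_transform_def \<gamma>2_def by (rule gen2[OF nz(1,2)])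
      also have "\<dots> = M a b x / M \<one>\<^bsub>G\<^esub> \<one>\<^bsub>G\<^esub> (act b x)" unfolding M_def gauge_transform_def by (rule refl)
      finally show ?thesis .
    qed
    have "\<forall>a\<in>carrier G. \<forall>b\<in>carrier G. \<forall>x\<in>X. \<forall>y\<in>X.
           gauge_transform G act \<beta> \<gamma>2 L a b x = gauge_transform G act \<beta> \<gamma>2 L a b y"
    proof (intro ballI)
      fix a b x y assume a: "a \<in> carrier G" and b: "b \<in> carrier G" and x: "x \<in> X" and y: "y \<in> X"
      show "gauge_transform G act \<beta> \<gamma>2 L a b x = gauge_transform G act \<beta> \<gamma>2 L a b y"
        unfolding eq[OF a b x] eq[OF a b y] by (rule K[OF a b x y])
    qed
    then show P2 unfolding P2_def using g2 by blast
  qed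
  moreover have "P2 \<Longrightarrow> P1"
  proof -
    assume P2
    then obtain \<beta> \<gamma> where g: "is_gauge G X \<beta> \<gamma>" and ind:
      "\<forall>a\<in>carrier G. \<forall>b\<in>carrier G. \<forall>x\<in>X. \<forall>y\<in>X.
           gauge_transform G act \<beta> \<gamma> L a b x = gauge_transform G act \<beta> \<gamma> L a b y"
      unfolding P2_def by blast
    show P1
    proof (cases "X = {}")
      case True
      have "is_gauge G X (\<lambda>_ _. 1) (\<lambda>_ _. 1)" by (simp add: is_gauge_def)
      then show ?thesis unfolding P1_def using True by blast
    next
      case False
      then obtain x0 where x0: "x0 \<in> X" by blast
      define \<beta>2 where "\<beta>2 g h = \<beta> g h / gauge_transform G act \<beta> \<gamma> L g h x0" for g h
      have g2: "is_gauge G X \<beta>2 \<gamma>"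
        using g Lp_nz[OF g _ _ x0] unfolding is_gauge_def \<beta>2_def by auto
      have "gauge_transform G act \<beta>2 \<gamma> L a b x = 1"
        if "a \<in> carrier G" "b \<in> carrier G" "x \<in> X" for a b x
      proof -
        have "gauge_transform G act \<beta>2 \<gamma> L a b x
              = gauge_transform G act \<beta> \<gamma> L a b x / gauge_transform G act \<beta> \<gamma> L a b x0"
        proof -
          have t: "gauge_transform G act \<beta>' \<gamma> L a b x = \<beta>' a b * (\<gamma> (a \<otimes>\<^bsub>G\<^esub> b) x / (\<gamma> a (act b x) * \<gamma> b x) * L a b x)" for \<beta>'
            unfolding gauge_transform_def by simp
          show ?thesis unfolding t[of \<beta>2] t[of \<beta>] by (simp add: \<beta>2_def)
        qed
        also have "\<dots> = 1"
        proof -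
          have "gauge_transform G act \<beta> \<gamma> L a b x = gauge_transform G act \<beta> \<gamma> L a b x0"
            using ind that x0 by blast
          then show ?thesis using Lp_nz[OF g that(1,2) x0] by simp
        qed
        finally show ?thesis .
      qed
      then show ?thesis unfolding P1_def using g2 by blast
    qed
  qed
  ultimately show ?thesis by blast
qed

end
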